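(* Let $d\ge2$ and $-\frac{1}{d^2-1} \le t \le \frac{1}{d+1}$. Suppose $\{|x_i\rangle\}_{i=1}^{d^2}$ and $\{|y_i\rangle\}_{i=1}^{d^2}$ are tight, informationally complete frames of unit vectors in $\mathbb{C}^d$ such that for all $i\neq j$ $$|\langle x_i|y_j\rangle|^2 = \frac{1-t}{d}, \qquad |\langle x_i|y_i\rangle|^2 = \frac{t(d^2-1)+1}{d}.$$ Then $$\frac{1}{d^2}\sum_{i=1}^{d^2} |x_i\rangle\langle x_i| \otimes |y_i\rangle\langle y_i| = \frac{t}{d}U_{SW} + \frac{1-t}{d^2}I_{d^2}.$$
   Context: $U_{SW}$ is the swap operator on $\mathbb{C}^d\otimes\mathbb{C}^d$, $U_{SW}(|u\rangle\otimes|v\rangle)=|v\rangle\otimes|u\rangle$. A set of unit vectors $\{|x_i\rangle\}_{i=1}^n\subset\mathbb{C}^d$ is a tight frame if $\sum_i |x_i\rangle\langle x_i| = cI_d$ for some real $c\ge0$; it is informationally complete if the projectors $|x_i\rangle\langle x_i|$ span the space of all complex $d\times d$ matrices. *)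

theory Defs
  imports "HOL-Analysis.Analysis"
begin

text \<open>Vectors of C^d are modelled as complex^'n with d = CARD('n);
  d x d matrices as complex^'n^'n; operators on C^d (x) C^d as matrices
  indexed by the finite type 'n \<times> 'n.\<close>

definition cinner :: "complex^'n::finite \<Rightarrow> complex^'n \<Rightarrow> complex" where
  "cinner x y = (\<Sum>k\<in>UNIV. cnj (x $ k) * y $ k)"

definition proj :: "complex^'n::finite \<Rightarrow> complex^'n^'n" where
  "proj x = (\<chi> a b. x $ a * cnj (x $ b))"

definition tight_frame :: "nat \<Rightarrow> (nat \<Rightarrow> complex^'n::finite) \<Rightarrow> bool" where
  "tight_frame n x \<longleftrightarrow> (\<exists>c::real. c \<ge> 0 \<and> (\<Sum>i<n. proj (x i)) = mat (complex_of_real c))"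

definition info_complete :: "nat \<Rightarrow> (nat \<Rightarrow> complex^'n::finite) \<Rightarrow> bool" where
  "info_complete n x \<longleftrightarrow>
     (\<forall>M::complex^'n^'n. \<exists>c::nat \<Rightarrow> complex. M = (\<chi> a b. \<Sum>i<n. c i * proj (x i) $ a $ b))"

definition kron :: "complex^'n::finite^'n \<Rightarrow> complex^'n^'n \<Rightarrow> complex^('n\<times>'n)^('n\<times>'n)" where
  "kron P Q = (\<chi> u v. P $ fst u $ fst v * Q $ snd u $ snd v)"

text \<open>swap operator: U(|a>|b>) = |b>|a>, matrix entry ((a,b),(c,d)) = [a=d \<and> b=c]\<close>
definition swap_op :: "complex^('n::finite\<times>'n)^('n\<times>'n)" where
  "swap_op = (\<chi> u v. if u = prod.swap v then 1 else 0)"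

end

theory Submission
  imports Defs
begin


definition trp :: "complex^'n::finite^'n \<Rightarrow> complex^'n^'n \<Rightarrow> complex" where
  "trp A B = (\<Sum>a\<in>UNIV. \<Sum>b\<in>UNIV. A$a$b * B$b$a)"

definition TT :: "complex^('n::finite\<times>'n)^('n\<times>'n) \<Rightarrow> complex^'n^'n \<Rightarrow> complex^'n^'n \<Rightarrow> complex" where
  "TT X A B = (\<Sum>u\<in>UNIV. \<Sum>v\<in>UNIV. X$u$v * A$fst v$fst u * B$snd v$snd u)"

definition trc :: "complex^'n::finite^'n \<Rightarrow> complex" where
  "trc A = (\<Sum>a\<in>UNIV. A$a$a)"

lemma sum_pair: "(\<Sum>u\<in>(UNIV::('a::finite\<times>'b::finite) set). f u) = (\<Sum>a\<in>UNIV. \<Sum>c\<in>UNIV. f (a,c))"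
  by (simp add: sum.cartesian_product UNIV_Times_UNIV[symmetric] del: UNIV_Times_UNIV)

lemma TT_expand: "TT X A B = (\<Sum>a\<in>UNIV. \<Sum>c\<in>UNIV. \<Sum>b\<in>UNIV. \<Sum>e\<in>UNIV. X$(a,c)$(b,e) * A$b$a * B$e$c)"
  unfolding TT_def by (simp add: sum_pair)

lemma delta2: "(\<Sum>b\<in>(UNIV::'a::finite set). \<Sum>e\<in>(UNIV::'b::finite set). if b = c \<and> e = a then f b e else 0) = f c a"
proof -
  have "(\<Sum>b\<in>(UNIV::'a set). \<Sum>e\<in>(UNIV::'b set). if b = c \<and> e = a then f b e else 0)
     = (\<Sum>b\<in>(UNIV::'a set). if b = c then (\<Sum>e\<in>(UNIV::'b set). if e = a then f b e else 0) else 0)"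
    by (rule sum.cong) auto
  also have "\<dots> = f c a" by simp
  finally show ?thesis .
qed

lemma TT_kron: "TT (kron P Q) A B = trp P A * trp Q B"
proof -
  have "TT (kron P Q) A B = (\<Sum>a\<in>UNIV. \<Sum>c\<in>UNIV. \<Sum>b\<in>UNIV. \<Sum>e\<in>UNIV. (P$a$b * A$b$a) * (Q$c$e * B$e$c))"
    unfolding TT_expand kron_def by (simp add: mult_ac)
  also have "\<dots> = trp P A * trp Q B"
    unfolding trp_def by (simp add: sum_product)
  finally show ?thesis .
qed

lemma TT_swap: "TT swap_op A B = trp A B"
proof -
  have "TT swap_op A B = (\<Sum>a\<in>UNIV. \<Sum>c\<in>UNIV. \<Sum>b\<in>UNIV. \<Sum>e\<in>UNIV. if b = c \<and> e = a then A$b$a * B$e$c else 0)"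
    unfolding TT_expand swap_op_def by (intro sum.cong) auto
  also have "\<dots> = (\<Sum>a\<in>UNIV. \<Sum>c\<in>UNIV. A$c$a * B$a$c)"
    by (simp only: delta2)
  also have "\<dots> = trp A B"
    unfolding trp_def by (subst sum.swap) (simp add: mult_ac)
  finally show ?thesis .
qed

lemma TT_id: "TT (mat 1) A B = trc A * trc B"
proof -
  have "TT (mat 1) A B = (\<Sum>a\<in>UNIV. \<Sum>c\<in>UNIV. \<Sum>b\<in>UNIV. \<Sum>e\<in>UNIV. if b = a \<and> e = c then A$b$a * B$e$c else 0)"
    unfolding TT_expand mat_def by (intro sum.cong) auto
  also have "\<dots> = (\<Sum>a\<in>UNIV. \<Sum>c\<in>UNIV. A$a$a * B$c$c)"
    by (simp only: delta2)
  also have "\<dots> = trc A * trc B"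
    unfolding trc_def by (simp add: sum_product)
  finally show ?thesis .
qed

lemma trp_comm: "trp A B = trp B A"
  unfolding trp_def by (subst sum.swap) (simp add: mult_ac)

lemma trp_proj: "trp (proj x) (proj y) = complex_of_real (cmod (cinner x y) ^ 2)"
proof -
  have "trp (proj x) (proj y) = (\<Sum>a\<in>UNIV. \<Sum>b\<in>UNIV. (cnj (x$b) * y$b) * (cnj (y$a) * x$a))"
    unfolding trp_def proj_def by (simp add: mult_ac)
  also have "\<dots> = cinner x y * cnj (cinner x y)"
    unfolding cinner_def by (subst sum.swap) (simp add: sum_product sum_distrib_left sum_distrib_right mult_ac)
  finally show ?thesis unfolding complex_norm_square .
qed

lemma trc_proj: "trc (proj x) = complex_of_real (norm x ^ 2)"
proof -
  have "norm x ^ 2 = (\<Sum>k\<in>UNIV. cmod (x$k) ^ 2)"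
    unfolding norm_vec_def L2_set_def by (simp add: sum_nonneg)
  then have "complex_of_real (norm x ^ 2) = (\<Sum>k\<in>UNIV. complex_of_real (cmod (x$k) ^ 2))"
    by simp
  also have "\<dots> = (\<Sum>k\<in>UNIV. x$k * cnj (x$k))"
    by (simp only: complex_norm_square)
  finally have "complex_of_real (norm x ^ 2) = (\<Sum>k\<in>UNIV. x$k * cnj (x$k))" .
  then show ?thesis unfolding trc_def proj_def by simp
qed

lemma TT_diff: "TT (X - Y) A B = TT X A B - TT Y A B"
  unfolding TT_def by (simp add: algebra_simps sum_subtractf)

lemma TT_add: "TT (X + Y) A B = TT X A B + TT Y A B"
  unfolding TT_def by (simp add: algebra_simps sum.distrib)

lemma TT_scale: "TT (r *\<^sub>R X) A B = complex_of_real r * TT X A B"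
  unfolding TT_def by (simp only: vector_scaleR_component) (simp add: scaleR_conv_of_real sum_distrib_left mult_ac)

lemma TT_sum: "finite S \<Longrightarrow> TT (\<Sum>i\<in>S. X i) A B = (\<Sum>i\<in>S. TT (X i) A B)"
proof (induction S rule: finite_induct)
  case empty then show ?case by (simp add: TT_def)
next
  case (insert x F) then show ?case by (simp add: TT_add)
qed

lemma TT_linA: "TT X (\<chi> a b. \<Sum>i<N. c i * F i $ a $ b) B = (\<Sum>i<N. c i * TT X (F i) B)"
proof -
  have "TT X (\<chi> a b. \<Sum>i<N. c i * F i $ a $ b) B
    = (\<Sum>u\<in>UNIV. \<Sum>v\<in>UNIV. \<Sum>i<N. c i * (X$u$v * F i$fst v$fst u * B$snd v$snd u))"
    unfolding TT_def by (simp add: sum_distrib_left sum_distrib_right mult_ac)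
  also have "\<dots> = (\<Sum>u\<in>UNIV. \<Sum>i<N. \<Sum>v\<in>UNIV. c i * (X$u$v * F i$fst v$fst u * B$snd v$snd u))"
    by (rule sum.cong, simp, rule sum.swap)
  also have "\<dots> = (\<Sum>i<N. \<Sum>u\<in>UNIV. \<Sum>v\<in>UNIV. c i * (X$u$v * F i$fst v$fst u * B$snd v$snd u))"
    by (rule sum.swap)
  also have "\<dots> = (\<Sum>i<N. c i * TT X (F i) B)"
    unfolding TT_def by (simp add: sum_distrib_left)
  finally show ?thesis .
qed

lemma TT_linB: "TT X A (\<chi> a b. \<Sum>i<N. c i * F i $ a $ b) = (\<Sum>i<N. c i * TT X A (F i))"
proof -
  have "TT X A (\<chi> a b. \<Sum>i<N. c i * F i $ a $ b)
    = (\<Sum>u\<in>UNIV. \<Sum>v\<in>UNIV. \<Sum>i<N. c i * (X$u$v * A$fst v$fst u * F i$snd v$snd u))"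
    unfolding TT_def by (simp add: sum_distrib_left sum_distrib_right mult_ac)
  also have "\<dots> = (\<Sum>u\<in>UNIV. \<Sum>i<N. \<Sum>v\<in>UNIV. c i * (X$u$v * A$fst v$fst u * F i$snd v$snd u))"
    by (rule sum.cong, simp, rule sum.swap)
  also have "\<dots> = (\<Sum>i<N. \<Sum>u\<in>UNIV. \<Sum>v\<in>UNIV. c i * (X$u$v * A$fst v$fst u * F i$snd v$snd u))"
    by (rule sum.swap)
  also have "\<dots> = (\<Sum>i<N. c i * TT X A (F i))"
    unfolding TT_def by (simp add: sum_distrib_left)
  finally show ?thesis .
qed

lemma TT_elem: "TT X (\<chi> p q. if p = a \<and> q = b then 1 else 0) (\<chi> p q. if p = c \<and> q = e then 1 else 0)
   = X $ (b,e) $ (a,c)"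
proof -
  have "TT X (\<chi> p q. if p = a \<and> q = b then 1 else 0) (\<chi> p q. if p = c \<and> q = e then 1 else 0)
     = (\<Sum>u\<in>UNIV. \<Sum>v\<in>UNIV. if u = (b,e) then (if v = (a,c) then X$u$v else 0) else 0)"
    unfolding TT_def by (rule sum.cong, simp, rule sum.cong, auto)
  also have "\<dots> = (\<Sum>u\<in>UNIV. if u = (b,e) then X$u$(a,c) else 0)"
  proof (rule sum.cong)
    fix u :: "'a \<times> 'a" 
    show "(\<Sum>v\<in>UNIV. if u = (b,e) then (if v = (a,c) then X$u$v else 0) else 0) = (if u = (b,e) then X$u$(a,c) else 0)"
      by (cases "u = (b,e)") (simp_all only: simp_thms if_True if_False sum.delta[OF finite] sum.delta'[OF finite] UNIV_I sum.neutral_const)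
  qed simp
  also have "\<dots> = X $ (b,e) $ (a,c)" by (simp only: sum.delta[OF finite] sum.delta'[OF finite] UNIV_I if_True)
  finally show ?thesis .
qed

lemma sum_ab:
  fixes a b :: real
  assumes "j < N" "k < N"
  shows "(\<Sum>i<N. (if i = j then a else b) * (if k = i then a else b))
     = real N * b^2 + 2 * b * (a - b) + (if j = k then (a - b)^2 else 0)"
proof -
  have "(\<Sum>i<N. (if i = j then a else b) * (if k = i then a else b))
    = (\<Sum>i<N. b^2 + (if i = j then b * (a - b) else 0) + (if i = k then b * (a - b) else 0)
          + (if i = j then (if i = k then (a-b)^2 else 0) else 0))"
    by (rule sum.cong) (auto simp: power2_eq_square algebra_simps)
  also have "\<dots> = real N * b^2 + 2 * b * (a - b) + (if j = k then (a - b)^2 else 0)"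
    using assms by (simp add: sum.distrib)
  finally show ?thesis .
qed

theorem theorem2:
  fixes x y :: "nat \<Rightarrow> complex^'n" and t
  defines "d \<equiv> CARD('n)"
  assumes "d \<ge> 2"
    and "- 1 / (real d ^ 2 - 1) \<le> t" and "t \<le> 1 / (real d + 1)"
    and "\<forall>i<d^2. norm (x i) = 1" and "\<forall>i<d^2. norm (y i) = 1"
    and "tight_frame (d^2) x" and "tight_frame (d^2) y"
    and "info_complete (d^2) x" and "info_complete (d^2) y"
    and "\<forall>i<d^2. \<forall>j<d^2. i \<noteq> j \<longrightarrow> (cmod (cinner (x i) (y j)))^2 = (1 - t) / real d"
    and "\<forall>i<d^2. (cmod (cinner (x i) (y i)))^2 = (t * (real d ^ 2 - 1) + 1) / real d"
  shows "(1 / real d ^ 2) *\<^sub>R (\<Sum>i<d^2. kron (proj (x i)) (proj (y i)))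
           = (t / real d) *\<^sub>R swap_op + ((1 - t) / real d ^ 2) *\<^sub>R mat 1"
proof -
  define N where "N = d^2"
  define a where "a = (t * (real d ^ 2 - 1) + 1) / real d"
  define b where "b = (1 - t) / real d"
  define G where "G = (\<Sum>i<N. kron (proj (x i)) (proj (y i)))"
  define R :: "complex^('n\<times>'n)^('n\<times>'n)" where "R = (real d * t) *\<^sub>R swap_op + (1 - t) *\<^sub>R mat 1"
  have d0: "real d > 0" using assms(2) by simp
  have m: "trp (proj (x i)) (proj (y j)) = complex_of_real (if i = j then a else b)"
    if "i < N" "j < N" for i j
  proof -
    have "(cmod (cinner (x i) (y j)))^2 = (if i = j then a else b)"
      using that assms(11,12) unfolding N_def a_def b_def by auto
    then show ?thesis by (simp only: trp_proj)
  qed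
  have trcx: "trc (proj (x i)) = 1" if "i < N" for i
    using that assms(5) unfolding trc_proj N_def by simp
  have trcy: "trc (proj (y i)) = 1" if "i < N" for i
    using that assms(6) unfolding trc_proj N_def by simp
  have ab: "a - b = real d * t" unfolding a_def b_def using d0
    by (simp add: field_simps power2_eq_square)
  have key: "TT (G - R) (proj (y j)) (proj (x k)) = 0" if j: "j < N" and k: "k < N" for j k
  proof -
    have "TT G (proj (y j)) (proj (x k))
      = (\<Sum>i<N. complex_of_real ((if i = j then a else b) * (if k = i then a else b)))"
      unfolding G_def TT_sum[OF finite_lessThan] TT_kron
      apply (rule sum.cong, simp)
      apply (subst trp_comm[of "proj (y _)" "proj (x k)"])
      using m j k by simp
    also have "\<dots> = complex_of_real (real N * b^2 + 2 * b * (a - b) + (if j = k then (a - b)^2 else 0))"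
      unfolding of_real_sum[symmetric] using sum_ab[OF j k] by simp
    finally have G1: "TT G (proj (y j)) (proj (x k)) = \<dots>" .
    have "TT R (proj (y j)) (proj (x k))
       = complex_of_real (real d * t * (if k = j then a else b) + (1 - t))"
      unfolding R_def TT_add TT_scale TT_swap TT_id trp_comm[of "proj (y j)"]
      using m[OF k j] trcx[OF k] trcy[OF j] by simp
    moreover have "real N * b^2 + 2 * b * (a - b) + (if j = k then (a - b)^2 else 0)
        = real d * t * (if k = j then a else b) + (1 - t)"
    proof -
      have "real N * b^2 = (1 - t)^2" unfolding N_def b_def using d0
        by (simp add: field_simps power2_eq_square)
      moreover have "2 * b * (a - b) = 2 * (1 - t) * t" unfolding ab unfolding b_def using d0
        by (simp add: field_simps)
      moreover have "real d * t * a = t * t * (real d ^ 2 - 1) + t" unfolding a_def using d0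
        by (simp add: field_simps)
      moreover have "real d * t * b = t * (1 - t)" unfolding b_def using d0
        by (simp add: field_simps)
      ultimately show ?thesis unfolding ab by (auto simp: power2_eq_square algebra_simps)
    qed
    ultimately show ?thesis using G1 by (simp add: TT_diff)
  qed
  have all: "TT (G - R) A B = 0" for A B
  proof -
    obtain c where c: "A = (\<chi> a b. \<Sum>i<N. c i * proj (y i) $ a $ b)"
      using assms(10) unfolding info_complete_def N_def by blast
    obtain e where e: "B = (\<chi> a b. \<Sum>i<N. e i * proj (x i) $ a $ b)"
      using assms(9) unfolding info_complete_def N_def by blast
    show ?thesis unfolding c e TT_linA TT_linB using key by simp
  qed
  have GR: "G = R"
  proof -
    have "(G - R) $ u $ v = 0" for u v
      using all[of "\<chi> p q. if p = fst v \<and> q = fst u then 1 else 0" "\<chi> p q. if p = snd v \<and> q = snd u then 1 else 0"]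
      unfolding TT_elem by simp
    then show ?thesis by (simp add: vec_eq_iff)
  qed
  have "(1 / real d ^ 2) *\<^sub>R G = (t / real d) *\<^sub>R swap_op + ((1 - t) / real d ^ 2) *\<^sub>R mat 1"
    unfolding GR R_def using d0 by (simp add: scaleR_add_right power2_eq_square)
  then show ?thesis unfolding G_def N_def .
qed

end
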